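(* Let $\epsilon,\gamma>0$. Suppose there is an online algorithm $\mathcal{A}$ for online bipartite matching in the random edge arrival model which, on every instance with $\mathcal{G}(1)\le \frac12+\epsilon$, outputs a matching of expected size at least $\left(\frac12+\gamma\right)|\textsc{OPT}|$. Then there is an online algorithm whose competitive ratio is at least $\frac12+\delta$, where $\delta=\frac{\epsilon\gamma}{\frac12+\epsilon+\gamma}$.
   Context: Online bipartite matching in the random edge arrival model: the edges of a fixed bipartite graph $G$ with $m$ edges arrive one at a time in a uniformly random order $\pi$; the algorithm knows $m$, and must immediately and irrevocably decide for each arriving edge whether to add it to its matching (which must remain a matching). $\textsc{OPT}$ is a maximum matching of $G$. The competitive ratio is the infimum over instances of (expected size of the output, over $\pi$ and internal coins)$/|\textsc{OPT}|$. Greedy adds an arriving edge whenever the current set plus this edge is a matching. For $f\in[0,1]$, $T_f^\pi$ is the matching Greedy produces after the first $fm$ edges of $\pi$, and $\mathcal{G}(f)=\mathbb{E}_\pi[|T_f^\pi|]/|\textsc{OPT}|$ for uniformly random $\pi$. *)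

theory Defs
  imports Complex_Main "HOL-Combinatorics.Multiset_Permutations"
begin

(* A bipartite graph is a finite set of edges (l, r) :: nat \<times> nat, where l is a
   left vertex and r a right vertex (the two sides are disjoint by construction). *)
type_synonym edge = "nat \<times> nat"

definition is_matching :: "edge set \<Rightarrow> bool" where
  "is_matching M \<longleftrightarrow> (\<forall>e1\<in>M. \<forall>e2\<in>M. e1 \<noteq> e2 \<longrightarrow> fst e1 \<noteq> fst e2 \<and> snd e1 \<noteq> snd e2)"

definition opt_size :: "edge set \<Rightarrow> nat" where
  "opt_size E = Max {card M | M. M \<subseteq> E \<and> is_matching M}"

definition accepted :: "(edge \<times> bool) list \<Rightarrow> edge set" where
  "accepted h = {e. (e, True) \<in> set h}"

definition can_add :: "edge set \<Rightarrow> edge \<Rightarrow> bool" where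
  "can_add M e \<longleftrightarrow> is_matching (insert e M)"

(* A (randomized) online algorithm, in behavioural form: given m (number of edges),
   the history of arrived edges together with its own past decisions, and the currently
   arriving edge, it returns the probability with which it accepts that edge.
   Edges whose addition would violate the matching property are always rejected. *)
type_synonym online_alg = "nat \<Rightarrow> (edge \<times> bool) list \<Rightarrow> edge \<Rightarrow> real"

definition valid_alg :: "online_alg \<Rightarrow> bool" where
  "valid_alg A \<longleftrightarrow> (\<forall>m h e. 0 \<le> A m h e \<and> A m h e \<le> 1)"

fun exp_run :: "online_alg \<Rightarrow> nat \<Rightarrow> (edge \<times> bool) list \<Rightarrow> edge list \<Rightarrow> real" where
  "exp_run A m h [] = 0"
| "exp_run A m h (e # es) =
     (if can_add (accepted h) e then
        A m h e * (1 + exp_run A m (h @ [(e, True)]) es)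
        + (1 - A m h e) * exp_run A m (h @ [(e, False)]) es
      else exp_run A m (h @ [(e, False)]) es)"

definition expected_output :: "online_alg \<Rightarrow> edge set \<Rightarrow> real" where
  "expected_output A E =
     (\<Sum>\<pi>\<in>permutations_of_set E. exp_run A (card E) [] \<pi>) / real (card (permutations_of_set E))"

definition competitive_ratio :: "online_alg \<Rightarrow> real" where
  "competitive_ratio A =
     (INF E \<in> {E :: edge set. finite E \<and> E \<noteq> {}}. expected_output A E / real (opt_size E))"

fun greedy :: "edge set \<Rightarrow> edge list \<Rightarrow> edge set" where
  "greedy M [] = M"
| "greedy M (e # es) = greedy (if can_add M e then insert e M else M) es"

definition T_greedy :: "real \<Rightarrow> edge list \<Rightarrow> edge set" where
  "T_greedy f \<pi> = greedy {} (take (nat \<lfloor>f * real (length \<pi>)\<rfloor>) \<pi>)"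

definition greedy_frac :: "edge set \<Rightarrow> real \<Rightarrow> real" where
  "greedy_frac E f =
     ((\<Sum>\<pi>\<in>permutations_of_set E. real (card (T_greedy f \<pi>))) / real (card (permutations_of_set E)))
     / real (opt_size E)"

end

theory Submission
  imports Defs
begin


lemma validD: "valid_alg A \<Longrightarrow> 0 \<le> A m h e \<and> A m h e \<le> 1"
  unfolding valid_alg_def by blast

definition fac :: "online_alg \<Rightarrow> nat \<Rightarrow> (edge \<times> bool) list \<Rightarrow> edge \<times> bool \<Rightarrow> real" where
  "fac A m pre x = (if can_add (accepted pre) (fst x) then (if snd x then A m pre (fst x) else 1 - A m pre (fst x)) else 1)"

fun lik :: "online_alg \<Rightarrow> nat \<Rightarrow> (edge \<times> bool) list \<Rightarrow> (edge \<times> bool) list \<Rightarrow> real" where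
  "lik A m pre [] = 1"
| "lik A m pre (x # xs) = fac A m pre x * lik A m (pre @ [x]) xs"

lemma lik_snoc: "lik A m pre (h @ [x]) = lik A m pre h * fac A m (pre @ h) x"
  by (induction h arbitrary: pre) (simp_all add: mult.assoc)

lemma fac_nonneg: "valid_alg A \<Longrightarrow> 0 \<le> fac A m pre x"
  unfolding fac_def using validD[of A m pre "fst x"] by auto

lemma lik_nonneg: "valid_alg A \<Longrightarrow> 0 \<le> lik A m pre h"
  by (induction h arbitrary: pre) (simp_all add: fac_nonneg)

definition L :: "online_alg \<Rightarrow> nat \<Rightarrow> (edge \<times> bool) list \<Rightarrow> real" where
  "L A m h = lik A m [] h"

definition mixW :: "real \<Rightarrow> online_alg \<Rightarrow> online_alg \<Rightarrow> nat \<Rightarrow> (edge \<times> bool) list \<Rightarrow> real" where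
  "mixW p A1 A2 m h = p * L A1 m h + (1 - p) * L A2 m h"

definition mix :: "real \<Rightarrow> online_alg \<Rightarrow> online_alg \<Rightarrow> online_alg" where
  "mix p A1 A2 m h e = (if mixW p A1 A2 m h = 0 then 0 else
      (p * L A1 m h * A1 m h e + (1 - p) * L A2 m h * A2 m h e) / mixW p A1 A2 m h)"

lemma mix_valid:
  assumes "valid_alg A1" "valid_alg A2" "0 \<le> p" "p \<le> 1"
  shows "valid_alg (mix p A1 A2)"
  unfolding valid_alg_def
proof (intro allI)
  fix m h e
  have l1: "0 \<le> L A1 m h" and l2: "0 \<le> L A2 m h" using lik_nonneg assms unfolding L_def by auto
  have a1: "0 \<le> A1 m h e" "A1 m h e \<le> 1" and a2: "0 \<le> A2 m h e" "A2 m h e \<le> 1"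
    using assms validD by blast+
  have n0: "0 \<le> p * L A1 m h * A1 m h e + (1 - p) * L A2 m h * A2 m h e"
    using l1 l2 a1 a2 assms by (simp add: mult_nonneg_nonneg)
  have n1: "p * L A1 m h * A1 m h e + (1 - p) * L A2 m h * A2 m h e \<le> mixW p A1 A2 m h"
    unfolding mixW_def
  proof (rule add_mono)
    show "p * L A1 m h * A1 m h e \<le> p * L A1 m h"
      using mult_left_mono[OF a1(2), of "p * L A1 m h"] l1 assms by simp
    show "(1 - p) * L A2 m h * A2 m h e \<le> (1 - p) * L A2 m h"
      using mult_left_mono[OF a2(2), of "(1 - p) * L A2 m h"] l2 assms by simp
  qed
  have wp: "0 \<le> mixW p A1 A2 m h" using n0 n1 by linarith
  show "0 \<le> mix p A1 A2 m h e \<and> mix p A1 A2 m h e \<le> 1"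
    unfolding mix_def using n0 n1 wp by (auto simp: divide_le_eq_1)
qed

lemma mix_run:
  assumes "valid_alg A1" "valid_alg A2" "0 \<le> p" "p \<le> 1"
  shows "mixW p A1 A2 m h * exp_run (mix p A1 A2) m h es
     = p * L A1 m h * exp_run A1 m h es + (1 - p) * L A2 m h * exp_run A2 m h es"
proof (induction es arbitrary: h)
  case Nil then show ?case by simp
next
  case (Cons e es)
  define B where "B = mix p A1 A2"
  define W where "W = mixW p A1 A2 m h"
  define l1 where "l1 = L A1 m h"
  define l2 where "l2 = L A2 m h"
  define a1 where "a1 = A1 m h e"
  define a2 where "a2 = A2 m h e"
  define b where "b = B m h e"
  show ?case
  proof (cases "can_add (accepted h) e")
    case False
    have "L A1 m (h @ [(e, False)]) = l1" "L A2 m (h @ [(e, False)]) = l2"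
      unfolding L_def l1_def l2_def using False by (simp_all add: lik_snoc fac_def)
    then have "mixW p A1 A2 m (h @ [(e, False)]) = W"
      unfolding W_def mixW_def l1_def l2_def by simp
    then show ?thesis using Cons.IH[of "h @ [(e, False)]"] False
      unfolding W_def l1_def l2_def
      by (simp add: \<open>L A1 m (h @ [(e, False)]) = l1\<close>[unfolded l1_def] \<open>L A2 m (h @ [(e, False)]) = l2\<close>[unfolded l2_def])
  next
    case True
    have LT1: "L A1 m (h @ [(e, True)]) = l1 * a1" and LF1: "L A1 m (h @ [(e, False)]) = l1 * (1 - a1)"
     and LT2: "L A2 m (h @ [(e, True)]) = l2 * a2" and LF2: "L A2 m (h @ [(e, False)]) = l2 * (1 - a2)"
      unfolding L_def l1_def l2_def a1_def a2_def using True by (simp_all add: lik_snoc fac_def)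
    have l1: "0 \<le> l1" and l2: "0 \<le> l2" using lik_nonneg assms unfolding L_def l1_def l2_def by auto
    have av: "0 \<le> a1" "a1 \<le> 1" "0 \<le> a2" "a2 \<le> 1"
      using assms validD unfolding a1_def a2_def by blast+
    have Wd: "W = p * l1 + (1 - p) * l2" unfolding W_def mixW_def l1_def l2_def by simp
    have Wb: "W * b = p * l1 * a1 + (1 - p) * l2 * a2"
    proof (cases "W = 0")
      case False then show ?thesis
        unfolding b_def B_def mix_def W_def l1_def l2_def a1_def a2_def by simp
    next
      case True
      have "0 \<le> p * l1" "0 \<le> (1 - p) * l2" using l1 l2 assms by auto
      then have "p * l1 = 0" "(1 - p) * l2 = 0" using True Wd by linarith+
      then have "p * l1 * a1 = 0" "(1 - p) * l2 * a2 = 0" by simp_all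
      then show ?thesis using True by (simp only: mult_zero_left add_0)
    qed
    have WT: "mixW p A1 A2 m (h @ [(e, True)]) = W * b"
      unfolding mixW_def LT1 LT2 Wb by (simp add: mult.assoc)
    have WF: "mixW p A1 A2 m (h @ [(e, False)]) = W - W * b"
    proof -
      have "W - W * b = p * l1 + (1 - p) * l2 - (p * l1 * a1 + (1 - p) * l2 * a2)"
        using Wd Wb by simp
      then show ?thesis unfolding mixW_def LF1 LF2 by (simp add: algebra_simps)
    qed
    note IT = Cons.IH[of "h @ [(e, True)]", unfolded WT LT1 LT2, folded B_def]
    note IF = Cons.IH[of "h @ [(e, False)]", unfolded WF LF1 LF2, folded B_def]
    have "W * exp_run B m h (e # es) = W * b + (W * b) * exp_run B m (h @ [(e, True)]) es
            + (W - W * b) * exp_run B m (h @ [(e, False)]) es"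
      using True unfolding b_def by (simp add: algebra_simps)
    also have "\<dots> = p * l1 * (a1 * (1 + exp_run A1 m (h @ [(e, True)]) es) + (1 - a1) * exp_run A1 m (h @ [(e, False)]) es)
        + (1 - p) * l2 * (a2 * (1 + exp_run A2 m (h @ [(e, True)]) es) + (1 - a2) * exp_run A2 m (h @ [(e, False)]) es)"
      unfolding IT IF using Wb by (simp add: algebra_simps)
    also have "\<dots> = p * l1 * exp_run A1 m h (e # es) + (1 - p) * l2 * exp_run A2 m h (e # es)"
      using True unfolding a1_def a2_def by simp
    finally show ?thesis unfolding W_def B_def l1_def l2_def .
  qed
qed



lemma exp_run_nonneg: "valid_alg A \<Longrightarrow> 0 \<le> exp_run A m h es"
proof (induction es arbitrary: h)
  case Nil then show ?case by simp
next
  case (Cons e es)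
  have "0 \<le> A m h e" "A m h e \<le> 1" using validD[OF Cons.prems] by auto
  with Cons show ?case by (simp add: add_nonneg_nonneg mult_nonneg_nonneg)
qed

definition G :: online_alg where "G m h e = 1"

lemma G_valid: "valid_alg G" unfolding valid_alg_def G_def by simp

lemma accepted_snoc: "accepted (h @ [(e, b)]) = (if b then insert e (accepted h) else accepted h)"
  unfolding accepted_def by auto

lemma accepted_finite: "finite (accepted h)"
proof -
  have "accepted h \<subseteq> fst ` set h" unfolding accepted_def by force
  then show ?thesis by (rule finite_subset) simp
qed

lemma greedy_finite: "finite M \<Longrightarrow> finite (greedy M es)"
  by (induction es arbitrary: M) auto

lemma G_run: "distinct es \<Longrightarrow> set es \<inter> accepted h = {} \<Longrightarrow>
   exp_run G m h es = real (card (greedy (accepted h) es)) - real (card (accepted h))"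
proof (induction es arbitrary: h)
  case Nil then show ?case by simp
next
  case (Cons e es)
  show ?case
  proof (cases "can_add (accepted h) e")
    case True
    have ih: "exp_run G m (h @ [(e, True)]) es
       = real (card (greedy (insert e (accepted h)) es)) - real (card (insert e (accepted h)))"
      using Cons.IH[of "h @ [(e, True)]"] Cons.prems by (auto simp: accepted_snoc)
    have "e \<notin> accepted h" using Cons.prems by auto
    then have "card (insert e (accepted h)) = Suc (card (accepted h))"
      using accepted_finite by simp
    have g1: "G m h e = 1" by (simp add: G_def)
    from ih True \<open>card (insert e (accepted h)) = Suc (card (accepted h))\<close> show ?thesis by (simp add: g1)
  next
    case False
    have ih: "exp_run G m (h @ [(e, False)]) es
       = real (card (greedy (accepted h) es)) - real (card (accepted h))"
      using Cons.IH[of "h @ [(e, False)]"] Cons.prems by (auto simp: accepted_snoc)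
    with False show ?thesis by simp
  qed
qed

lemma matching_subset: "is_matching M \<Longrightarrow> N \<subseteq> M \<Longrightarrow> is_matching N"
  unfolding is_matching_def by blast

lemma can_add_anti: "M \<subseteq> M' \<Longrightarrow> can_add M' e \<Longrightarrow> can_add M e"
  unfolding can_add_def using matching_subset by blast

lemma greedy_mono: "M \<subseteq> greedy M es"
  by (induction es arbitrary: M) (simp, fastforce)

lemma greedy_match: "is_matching M \<Longrightarrow> is_matching (greedy M es)"
  by (induction es arbitrary: M) (auto simp: can_add_def)

lemma greedy_max: "e \<in> set es \<Longrightarrow> e \<in> greedy M es \<or> \<not> can_add (greedy M es) e"
proof (induction es arbitrary: M)
  case Nil then show ?case by simp
next
  case (Cons x es)
  define M' where "M' = (if can_add M x then insert x M else M)"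
  have gx: "greedy M (x # es) = greedy M' es" unfolding M'_def by (simp only: greedy.simps)
  have sub: "M' \<subseteq> greedy M' es" by (rule greedy_mono)
  show ?case
  proof (cases "e = x")
    case True
    show ?thesis
    proof (cases "can_add M x")
      case True
      then have "x \<in> M'" unfolding M'_def by simp
      then show ?thesis using sub \<open>e = x\<close> gx by auto
    next
      case False
      then have "M \<subseteq> M'" unfolding M'_def by simp
      then have "\<not> can_add (greedy M' es) e" using can_add_anti[of M "greedy M' es" x] sub False \<open>e = x\<close> by blast
      then show ?thesis unfolding gx by blast
    qed
  next
    case False
    then have "e \<in> set es" using Cons.prems by simp
    from Cons.IH[OF this, of M'] show ?thesis unfolding gx .
  qed
qed

lemma cover:
  assumes "is_matching M" "e \<in> M \<or> \<not> can_add M e"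
  shows "\<exists>f\<in>M. fst f = fst e \<or> snd f = snd e"
proof (cases "e \<in> M")
  case True then show ?thesis by blast
next
  case False
  with assms(2) have "\<not> is_matching (insert e M)" unfolding can_add_def by blast
  then obtain e1 e2 where e12: "e1 \<in> insert e M" "e2 \<in> insert e M" "e1 \<noteq> e2"
      "fst e1 = fst e2 \<or> snd e1 = snd e2"
    unfolding is_matching_def by blast
  show ?thesis
  proof (cases "e1 = e")
    case True
    then have "e2 \<in> M" using e12 by auto
    then show ?thesis using e12 True by auto
  next
    case False
    then have m1: "e1 \<in> M" using e12 by auto
    show ?thesis
    proof (cases "e2 = e")
      case True then show ?thesis using m1 e12 by auto
    next
      case False
      then have "e2 \<in> M" using e12 by auto
      then have "False" using m1 e12 assms(1) unfolding is_matching_def by blast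
      then show ?thesis ..
    qed
  qed
qed

lemma card_bound:
  assumes "finite M" "is_matching Q" "\<forall>e\<in>Q. \<exists>f\<in>M. fst f = fst e \<or> snd f = snd e"
  shows "card Q \<le> 2 * card M"
proof -
  define \<phi> :: "edge \<Rightarrow> nat + nat" where
    "\<phi> e = (if fst e \<in> fst ` M then Inl (fst e) else Inr (snd e))" for e
  have inj: "inj_on \<phi> Q"
  proof (rule inj_onI)
    fix x y assume xy: "x \<in> Q" "y \<in> Q" "\<phi> x = \<phi> y"
    show "x = y"
    proof (rule ccontr)
      assume "x \<noteq> y"
      then have "fst x \<noteq> fst y" "snd x \<noteq> snd y" using assms(2) xy unfolding is_matching_def by auto
      then show False using xy(3) unfolding \<phi>_def by (auto split: if_splits)
    qed
  qed
  have img: "\<phi> ` Q \<subseteq> Inl ` fst ` M \<union> Inr ` snd ` M"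
  proof
    fix z assume "z \<in> \<phi> ` Q"
    then obtain e where e: "e \<in> Q" "z = \<phi> e" by blast
    then obtain f where f: "f \<in> M" "fst f = fst e \<or> snd f = snd e" using assms(3) by blast
    show "z \<in> Inl ` fst ` M \<union> Inr ` snd ` M"
    proof (cases "fst e \<in> fst ` M")
      case True then show ?thesis using e unfolding \<phi>_def by auto
    next
      case False
      have "fst f \<noteq> fst e" using f(1) False by (metis image_eqI)
      then have "snd f = snd e" using f(2) by blast
      then have "z = Inr (snd f)" using e False unfolding \<phi>_def by simp
      then show ?thesis using f(1) by blast
    qed
  qed
  have "card Q = card (\<phi> ` Q)" using card_image[OF inj] by simp
  also have "\<dots> \<le> card (Inl ` fst ` M \<union> Inr ` snd ` M)"
    using img assms(1) by (intro card_mono) auto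
  also have "\<dots> \<le> card (Inl ` fst ` M :: (nat + nat) set) + card (Inr ` snd ` M :: (nat + nat) set)"
    by (rule card_Un_le)
  also have "\<dots> \<le> card M + card M"
  proof (rule add_mono)
    show "card (Inl ` fst ` M :: (nat + nat) set) \<le> card M"
      unfolding image_comp using card_image_le[OF assms(1)] by blast
    show "card (Inr ` snd ` M :: (nat + nat) set) \<le> card M"
      unfolding image_comp using card_image_le[OF assms(1)] by blast
  qed
  finally show ?thesis by simp
qed

lemma opt_props:
  assumes "finite E" "E \<noteq> {}"
  shows "\<exists>Q. Q \<subseteq> E \<and> is_matching Q \<and> card Q = opt_size E" and "1 \<le> opt_size E"
proof -
  define S where "S = {card M | M. M \<subseteq> E \<and> is_matching M}"
  have os: "opt_size E = Max S" unfolding opt_size_def S_def ..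
  have sub: "S \<subseteq> card ` Pow E"
  proof
    fix x assume "x \<in> S"
    then obtain M where "x = card M" "M \<subseteq> E" unfolding S_def by blast
    then show "x \<in> card ` Pow E" by blast
  qed
  have fin: "finite S" using finite_subset[OF sub] assms(1) by blast
  obtain e where e: "e \<in> E" using assms(2) by blast
  have m1: "is_matching {e}" unfolding is_matching_def by simp
  have eS: "card {e} \<in> S" unfolding S_def using e m1 by blast
  then have ne: "S \<noteq> {}" by blast
  show "\<exists>Q. Q \<subseteq> E \<and> is_matching Q \<and> card Q = opt_size E"
  proof -
    have "Max S \<in> S" using Max_in[OF fin ne] .
    then obtain Q where "Max S = card Q" "Q \<subseteq> E" "is_matching Q" unfolding S_def by blast
    then show ?thesis unfolding os by auto
  qed
  have c1: "card {e} = 1" by simp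
  have "card {e} \<le> Max S" by (rule Max_ge[OF fin eS])
  then show "1 \<le> opt_size E" unfolding os c1 .
qed

lemma greedy_half:
  assumes "finite E" "E \<noteq> {}" "\<pi> \<in> permutations_of_set E"
  shows "real (opt_size E) \<le> 2 * real (card (greedy {} \<pi>))"
proof -
  have \<pi>: "set \<pi> = E" "distinct \<pi>" using permutations_of_setD[OF assms(3)] by simp_all
  obtain Q where Q: "Q \<subseteq> E" "is_matching Q" "card Q = opt_size E" using opt_props(1)[OF assms(1,2)] by blast
  have mM: "is_matching (greedy {} \<pi>)" by (rule greedy_match) (simp add: is_matching_def)
  have fM: "finite (greedy {} \<pi>)" by (rule greedy_finite) simp
  have "\<forall>e\<in>Q. \<exists>f\<in>greedy {} \<pi>. fst f = fst e \<or> snd f = snd e"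
  proof
    fix e assume "e \<in> Q"
    then have "e \<in> set \<pi>" using Q(1) \<pi>(1) by blast
    then have "e \<in> greedy {} \<pi> \<or> \<not> can_add (greedy {} \<pi>) e" by (rule greedy_max)
    then show "\<exists>f\<in>greedy {} \<pi>. fst f = fst e \<or> snd f = snd e" by (rule cover[OF mM])
  qed
  from card_bound[OF fM Q(2) this] have "opt_size E \<le> 2 * card (greedy {} \<pi>)" unfolding Q(3) .
  then have "real (opt_size E) \<le> real (2 * card (greedy {} \<pi>))" by (rule of_nat_mono)
  then show ?thesis by simp
qed



lemma L_nil: "L A m [] = 1" unfolding L_def by simp

lemma expected_mix:
  assumes "valid_alg A1" "valid_alg A2" "0 \<le> p" "p \<le> 1"
  shows "expected_output (mix p A1 A2) E = p * expected_output A1 E + (1 - p) * expected_output A2 E"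
proof -
  have pt: "exp_run (mix p A1 A2) m [] \<pi> = p * exp_run A1 m [] \<pi> + (1 - p) * exp_run A2 m [] \<pi>" for m \<pi>
    using mix_run[OF assms, of m "[]" \<pi>] by (simp add: mixW_def L_nil)
  show ?thesis unfolding expected_output_def pt
    by (simp add: sum.distrib sum_distrib_left[symmetric] add_divide_distrib)
qed

lemma T1: "T_greedy 1 \<pi> = greedy {} \<pi>" unfolding T_greedy_def by simp

lemma expected_G:
  "expected_output G E = (\<Sum>\<pi>\<in>permutations_of_set E. real (card (greedy {} \<pi>))) / real (card (permutations_of_set E))"
proof -
  have "exp_run G (card E) [] \<pi> = real (card (greedy {} \<pi>))" if "\<pi> \<in> permutations_of_set E" for \<pi>
  proof -
    have "distinct \<pi>" using permutations_of_setD[OF that] by simp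
    moreover have "accepted [] = {}" unfolding accepted_def by simp
    ultimately show ?thesis using G_run[of \<pi> "[]" "card E"] by simp
  qed
  then show ?thesis unfolding expected_output_def by (simp cong: sum.cong)
qed

lemma greedy_frac1:
  "greedy_frac E 1 = expected_output G E / real (opt_size E)"
  unfolding greedy_frac_def expected_G T1 ..

lemma ratio_bound:
  fixes \<epsilon> \<gamma> :: real and A :: online_alg
  assumes "\<epsilon> > 0" and "\<gamma> > 0"
    and "valid_alg A"
    and H: "\<forall>E :: edge set. finite E \<and> E \<noteq> {} \<and> greedy_frac E 1 \<le> 1/2 + \<epsilon> \<longrightarrow>
           expected_output A E \<ge> (1/2 + \<gamma>) * real (opt_size E)"
    and E: "finite E" "E \<noteq> {}"
  defines "p \<equiv> \<epsilon> / (1/2 + \<epsilon> + \<gamma>)"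
  shows "1/2 + \<epsilon> * \<gamma> / (1/2 + \<epsilon> + \<gamma>) \<le> expected_output (mix p A G) E / real (opt_size E)"
proof -
  define S where "S = 1/2 + \<epsilon> + \<gamma>"
  have S: "S > 0" using assms unfolding S_def by simp
  have p0: "0 \<le> p" and p1: "p \<le> 1" using assms unfolding p_def by (auto simp: divide_le_eq_1)
  define oo where "oo = real (opt_size E)"
  have o1: "1 \<le> oo" unfolding oo_def using opt_props(2)[OF E] by simp
  define P where "P = permutations_of_set E"
  define N where "N = real (card P)"
  have N: "N > 0" unfolding N_def P_def using E(1) by simp
  define eA where "eA = expected_output A E"
  define eG where "eG = expected_output G E"
  have eA0: "0 \<le> eA" unfolding eA_def expected_output_def
    using exp_run_nonneg[OF assms(3)] by (simp add: sum_nonneg)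
  have eG: "eG = (\<Sum>\<pi>\<in>P. real (card (greedy {} \<pi>))) / N"
    unfolding eG_def expected_G P_def N_def ..
  have "N * (oo / 2) \<le> (\<Sum>\<pi>\<in>P. real (card (greedy {} \<pi>)))"
  proof -
    have "(\<Sum>\<pi>\<in>P. oo / 2) \<le> (\<Sum>\<pi>\<in>P. real (card (greedy {} \<pi>)))"
    proof (rule sum_mono)
      fix \<pi> assume "\<pi> \<in> P"
      then have "oo \<le> 2 * real (card (greedy {} \<pi>))" using greedy_half[OF E] unfolding P_def oo_def by blast
      then show "oo / 2 \<le> real (card (greedy {} \<pi>))" by simp
    qed
    then show ?thesis unfolding N_def by simp
  qed
  then have eGh: "oo / 2 \<le> eG" unfolding eG using N by (simp add: pos_le_divide_eq mult.commute)
  have mixeq: "expected_output (mix p A G) E = p * eA + (1 - p) * eG"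
    unfolding eA_def eG_def by (rule expected_mix[OF assms(3) G_valid p0 p1])
  have target: "1/2 + \<epsilon> * \<gamma> / S \<le> (p * eA + (1 - p) * eG) / oo"
  proof (cases "eG / oo \<le> 1/2 + \<epsilon>")
    case True
    then have "greedy_frac E 1 \<le> 1/2 + \<epsilon>" unfolding greedy_frac1 eG_def oo_def .
    then have hA: "(1/2 + \<gamma>) * oo \<le> eA" using H E unfolding eA_def oo_def by blast
    have "p * ((1/2 + \<gamma>) * oo) + (1 - p) * (oo / 2) \<le> p * eA + (1 - p) * eG"
      using hA eGh p0 p1 by (intro add_mono mult_left_mono) auto
    moreover have "p * ((1/2 + \<gamma>) * oo) + (1 - p) * (oo / 2) = (1/2 + \<epsilon> * \<gamma> / S) * oo"
      unfolding p_def S_def[symmetric] using S by (simp add: field_simps)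
    ultimately show ?thesis using o1 by (simp add: pos_le_divide_eq)
  next
    case False
    then have "(1/2 + \<epsilon>) * oo < eG" using o1 by (simp add: pos_divide_le_eq)
    then have "(1 - p) * ((1/2 + \<epsilon>) * oo) \<le> (1 - p) * eG" using p1 by (intro mult_left_mono) auto
    moreover have "0 \<le> p * eA" using p0 eA0 by simp
    moreover have "(1 - p) * ((1/2 + \<epsilon>) * oo) = (1/2 + \<epsilon> * \<gamma> / S) * oo"
      unfolding p_def S_def[symmetric] using S by (simp add: field_simps S_def)
    ultimately show ?thesis using o1 by (simp add: pos_le_divide_eq)
  qed
  then show ?thesis unfolding mixeq oo_def S_def .
qed


theorem lemma1:
  fixes \<epsilon> \<gamma> :: real and A :: online_alg
  assumes "\<epsilon> > 0" and "\<gamma> > 0"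
    and "valid_alg A"
    and "\<forall>E :: edge set. finite E \<and> E \<noteq> {} \<and> greedy_frac E 1 \<le> 1/2 + \<epsilon> \<longrightarrow>
           expected_output A E \<ge> (1/2 + \<gamma>) * real (opt_size E)"
  shows "\<exists>B. valid_alg B \<and>
           competitive_ratio B \<ge> 1/2 + \<epsilon> * \<gamma> / (1/2 + \<epsilon> + \<gamma>)"
proof (intro exI conjI)
  define p where "p = \<epsilon> / (1/2 + \<epsilon> + \<gamma>)"
  have p0: "0 \<le> p" and p1: "p \<le> 1" using assms unfolding p_def by (auto simp: divide_le_eq_1)
  show "valid_alg (mix p A G)" by (rule mix_valid[OF assms(3) G_valid p0 p1])
  have ne: "{E :: edge set. finite E \<and> E \<noteq> {}} \<noteq> {}"
  proof -
    have "{(0::nat, 0::nat)} \<in> {E :: edge set. finite E \<and> E \<noteq> {}}" by simp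
    then show ?thesis by blast
  qed
  show "1/2 + \<epsilon> * \<gamma> / (1/2 + \<epsilon> + \<gamma>) \<le> competitive_ratio (mix p A G)"
    unfolding competitive_ratio_def
  proof (rule cINF_greatest[OF ne])
    fix E :: "edge set" assume "E \<in> {E :: edge set. finite E \<and> E \<noteq> {}}"
    then have E: "finite E" "E \<noteq> {}" by auto
    show "1/2 + \<epsilon> * \<gamma> / (1/2 + \<epsilon> + \<gamma>) \<le> expected_output (mix p A G) E / real (opt_size E)"
      using ratio_bound[OF assms E] unfolding p_def .
  qed
qed

end
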